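(* Let $m,n$ be positive integers with $m\ge n$. Then there exists a private information distinguishing debate game $B=(A,S,P,C_w,C_l)$ such that $|C_w(s)|\ge m$ and $|C_l(s)|\le n$ for all $s\in S$, but $e^{\mathrm{PIDDG}}_B(M)\ge\frac{n}{2m}$ for every policy $M$.
   Context: Let $\delta$ be a special default action. A PIDDG is a tuple $(A,S,P,C_w,C_l)$ with $A$ finite, $\delta\notin A$, $S$ finite, $P$ a probability mass function on $S$, and $C_w,C_l:S\to\mathcal P(A)$. A policy is $M:\{1,2\}\times(A\cup\{\delta\})^2\to[0,1]$ with $M(1,a_1,a_2)+M(2,a_1,a_2)=1$. $G_1(B,M)$ is the following Bayesian game with agents $1,2$. Each agent has action set $A\cup\{\delta\}$ and type set $\mathcal P(A)$. A scenario $s\sim P$ is drawn, and agent 1 gets type $C_w(s)$ while agent 2 gets type $C_l(s)$. Payoffs are as follows: - if both agents play available actions ($a_i\in t_i\cup\{\delta\}$), agent $i$ gets $M(i,a_1,a_2)$; - if exactly one plays an unavailable action, it gets $0$ and the other gets $1$; - if both play unavailable actions, each gets $1/2$. $G_2(B,M)$ is the same with types swapped. The error is $e^{\mathrm{PIDDG}}_B(M)=\frac{v_1(G_2(B,M))+v_2(G_1(B,M))}{2}$, where $v_i$ is the value of the zero-sum Bayesian game to agent $i$. *)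

theory Defs
  imports Main "HOL-Library.Extended_Real" Complex_Main
begin

text \<open>Actions are of type nat option: None is the default action delta, Some x is x in A.
  Agents are indexed by the naturals 1 and 2.\<close>

definition acts :: "nat set \<Rightarrow> nat option set" where
  "acts A = insert None (Some ` A)"

definition avail :: "nat set \<Rightarrow> nat option \<Rightarrow> bool" where
  "avail t a = (case a of None \<Rightarrow> True | Some x \<Rightarrow> x \<in> t)"

definition payoff :: "(nat \<Rightarrow> nat option \<Rightarrow> nat option \<Rightarrow> real) \<Rightarrow> nat \<Rightarrow>
    nat set \<Rightarrow> nat set \<Rightarrow> nat option \<Rightarrow> nat option \<Rightarrow> real" where
  "payoff M i t1 t2 a1 a2 =
     (if avail t1 a1 \<and> avail t2 a2 then M i a1 a2
      else if avail t1 a1 then (if i = 1 then 1 else 0)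
      else if avail t2 a2 then (if i = 1 then 0 else 1)
      else 1/2)"

definition is_strategy :: "nat set \<Rightarrow> (nat set \<Rightarrow> nat option \<Rightarrow> real) \<Rightarrow> bool" where
  "is_strategy A \<sigma> \<longleftrightarrow> (\<forall>t a. 0 \<le> \<sigma> t a) \<and> (\<forall>t a. a \<notin> acts A \<longrightarrow> \<sigma> t a = 0)
     \<and> (\<forall>t. sum (\<sigma> t) (acts A) = 1)"

definition exp_payoff :: "nat set \<Rightarrow> nat set \<Rightarrow> (nat \<Rightarrow> real) \<Rightarrow> (nat \<Rightarrow> nat set) \<Rightarrow>
    (nat \<Rightarrow> nat set) \<Rightarrow> (nat \<Rightarrow> nat option \<Rightarrow> nat option \<Rightarrow> real) \<Rightarrow> nat \<Rightarrow>
    (nat set \<Rightarrow> nat option \<Rightarrow> real) \<Rightarrow> (nat set \<Rightarrow> nat option \<Rightarrow> real) \<Rightarrow> real" where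
  "exp_payoff A S P T1 T2 M i \<sigma>1 \<sigma>2 =
     (\<Sum>s\<in>S. P s * (\<Sum>a1\<in>acts A. \<Sum>a2\<in>acts A.
        \<sigma>1 (T1 s) a1 * \<sigma>2 (T2 s) a2 * payoff M i (T1 s) (T2 s) a1 a2))"

definition val1 where
  "val1 A S P T1 T2 M =
     (SUP \<sigma>1\<in>{\<sigma>. is_strategy A \<sigma>}. INF \<sigma>2\<in>{\<sigma>. is_strategy A \<sigma>}.
        exp_payoff A S P T1 T2 M 1 \<sigma>1 \<sigma>2)"

definition val2 where
  "val2 A S P T1 T2 M =
     (SUP \<sigma>2\<in>{\<sigma>. is_strategy A \<sigma>}. INF \<sigma>1\<in>{\<sigma>. is_strategy A \<sigma>}.
        exp_payoff A S P T1 T2 M 2 \<sigma>1 \<sigma>2)"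

definition is_PIDDG :: "nat set \<Rightarrow> nat set \<Rightarrow> (nat \<Rightarrow> real) \<Rightarrow> (nat \<Rightarrow> nat set) \<Rightarrow>
    (nat \<Rightarrow> nat set) \<Rightarrow> bool" where
  "is_PIDDG A S P Cw Cl \<longleftrightarrow> finite A \<and> finite S \<and> (\<forall>s\<in>S. 0 \<le> P s) \<and> sum P S = 1
     \<and> (\<forall>s\<in>S. Cw s \<subseteq> A \<and> Cl s \<subseteq> A)"

definition is_policy :: "nat set \<Rightarrow> (nat \<Rightarrow> nat option \<Rightarrow> nat option \<Rightarrow> real) \<Rightarrow> bool" where
  "is_policy A M \<longleftrightarrow> (\<forall>a1\<in>acts A. \<forall>a2\<in>acts A.
     0 \<le> M 1 a1 a2 \<and> M 1 a1 a2 \<le> 1 \<and> 0 \<le> M 2 a1 a2 \<and> M 2 a1 a2 \<le> 1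
     \<and> M 1 a1 a2 + M 2 a1 a2 = 1)"

text \<open>G1: agent 1 has type Cw, agent 2 has type Cl; G2: types swapped.\<close>
definition piddg_error where
  "piddg_error A S P Cw Cl M = (val1 A S P Cl Cw M + val2 A S P Cw Cl M) / 2"

end

theory Submission
  imports Defs
begin


lemma fracless: "0 < (d::real) \<Longrightarrow> 0 < e \<Longrightarrow> x*e < y*d \<Longrightarrow> x/d < y/e"
  by (simp add: field_simps)

lemma sum_ind2: "finite X \<Longrightarrow> y\<in>X \<Longrightarrow> (\<Sum>x\<in>X. (if x = y then a else 0) * f x) = a * (f y::real)"
  by (simp add: if_distrib[of "\<lambda>u. u * _"] sum.delta' cong: if_cong)

lemma sum_ind: "finite X \<Longrightarrow> y\<in>X \<Longrightarrow> (\<Sum>x\<in>X. (if x = y then 1 else 0) * f x) = (f y::real)"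
  by (simp add: if_distrib[of "\<lambda>u. u * _"] sum.delta' cong: if_cong)

lemma sep_lemma:
  fixes L U :: "real set"
  assumes "finite L" "finite U" "L \<noteq> {}" "\<forall>l\<in>L. \<forall>u\<in>U. l < u"
  shows "\<exists>t. (\<forall>l\<in>L. l < t) \<and> (\<forall>u\<in>U. t < u)"
proof (cases "U = {}")
  case True
  then show ?thesis using assms by (intro exI[of _ "Max L + 1"]) (auto dest: Max_ge)
next
  case False
  have lt: "Max L < Min U" using assms False by (simp add: Max_in Min_in)
  have "\<forall>l\<in>L. l \<le> Max L" "\<forall>u\<in>U. Min U \<le> u" using assms by auto
  then show ?thesis using lt
    by (intro exI[of _ "(Max L + Min U)/2"]) fastforce
qed

lemma ville:
  fixes C :: "'c set"
  assumes "finite C"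
  shows "finite (X :: ('c \<Rightarrow> real) set) \<Longrightarrow>
    (\<exists>w. (\<forall>x\<in>X. 0 \<le> w x) \<and> 0 < sum w X \<and> (\<forall>c\<in>C. 0 \<le> (\<Sum>x\<in>X. w x * x c)))
    \<or> (\<exists>q. (\<forall>c\<in>C. 0 \<le> q c) \<and> (\<forall>x\<in>X. (\<Sum>c\<in>C. x c * q c) < 0))"
  using assms
proof (induction C arbitrary: X rule: finite_induct)
  case empty
  show ?case
  proof (cases "X = {}")
    case True then show ?thesis by auto
  next
    case False
    then have "0 < sum (\<lambda>_. 1::real) X" using empty by (simp add: card_gt_0_iff)
    then show ?thesis by (intro disjI1 exI[of _ "\<lambda>_. 1"]) auto
  qed
next
  case (insert c0 C')
  define PR where "PR = {(i,j). i\<in>X \<and> j\<in>X \<and> 0 < i c0 \<and> j c0 < 0}"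
  define pr where "pr = (\<lambda>(i::'c\<Rightarrow>real,j::'c\<Rightarrow>real). (\<lambda>c. i c0 * j c - j c0 * i c))"
  define X' where "X' = {x\<in>X. 0 \<le> x c0} \<union> pr ` PR"
  have finPR: "finite PR" unfolding PR_def
    by (rule finite_subset[of _ "X \<times> X"]) (use insert.prems in auto)
  have finX': "finite X'" unfolding X'_def using finPR insert.prems by auto
  from insert.IH[OF finX'] show ?case
  proof
    assume "\<exists>w. (\<forall>x\<in>X'. 0 \<le> w x) \<and> 0 < sum w X' \<and> (\<forall>c\<in>C'. 0 \<le> (\<Sum>x\<in>X'. w x * x c))"
    then obtain w' where w'0: "\<forall>x\<in>X'. 0 \<le> w' x" and w'p: "0 < sum w' X'"
      and w'c: "\<forall>c\<in>C'. 0 \<le> (\<Sum>x\<in>X'. w' x * x c)" by blast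
    have "\<forall>y\<in>X'. \<exists>\<beta>. (\<forall>x\<in>X. 0 \<le> \<beta> x) \<and> 0 < sum \<beta> X \<and> 0 \<le> (\<Sum>x\<in>X. \<beta> x * x c0)
           \<and> (\<forall>c. y c = (\<Sum>x\<in>X. \<beta> x * x c))"
    proof
      fix y assume "y \<in> X'"
      then consider "y \<in> X" "0 \<le> y c0" | i j where "(i,j) \<in> PR" "y = pr (i,j)"
        unfolding X'_def by auto
      then show "\<exists>\<beta>. (\<forall>x\<in>X. 0 \<le> \<beta> x) \<and> 0 < sum \<beta> X \<and> 0 \<le> (\<Sum>x\<in>X. \<beta> x * x c0)
           \<and> (\<forall>c. y c = (\<Sum>x\<in>X. \<beta> x * x c))"
      proof cases
        case 1
        show ?thesis
          by (rule exI[of _ "\<lambda>x. if x = y then 1 else 0"])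
             (use 1 insert.prems in \<open>simp add: sum_ind\<close>)
      next
        case 2
        then have ij: "i \<in> X" "j \<in> X" "0 < i c0" "j c0 < 0" unfolding PR_def by auto
        then have "i \<noteq> j" by auto
        have eqc: "(\<Sum>x\<in>X. ((if x = j then i c0 else 0) + (if x = i then - j c0 else 0)) * x c) = i c0 * j c - j c0 * i c" for c
          using ij insert.prems \<open>i \<noteq> j\<close> by (simp only: distrib_right sum.distrib sum_ind2)
        show ?thesis
        proof (rule exI[of _ "\<lambda>x. (if x = j then i c0 else 0) + (if x = i then - j c0 else 0)"], intro conjI ballI allI)
          fix x show "x \<in> X \<Longrightarrow> 0 \<le> (if x = j then i c0 else 0) + (if x = i then - j c0 else 0)"
            using ij \<open>i \<noteq> j\<close> by auto
        next
          show "0 < (\<Sum>x\<in>X. (if x = j then i c0 else 0) + (if x = i then - j c0 else 0))"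
            using ij insert.prems by (simp add: sum.distrib sum.delta')
        next
          show "0 \<le> (\<Sum>x\<in>X. ((if x = j then i c0 else 0) + (if x = i then - j c0 else 0)) * x c0)"
            unfolding eqc by simp
        next
          fix c show "y c = (\<Sum>x\<in>X. ((if x = j then i c0 else 0) + (if x = i then - j c0 else 0)) * x c)"
            unfolding eqc using 2 by (simp add: pr_def)
        qed
      qed
    qed
    from bchoice[OF this] obtain \<beta> where \<beta>: "\<forall>y\<in>X'. (\<forall>x\<in>X. 0 \<le> \<beta> y x) \<and> 0 < sum (\<beta> y) X \<and> 0 \<le> (\<Sum>x\<in>X. \<beta> y x * x c0)
           \<and> (\<forall>c. y c = (\<Sum>x\<in>X. \<beta> y x * x c))" by blast
    define w where "w x = (\<Sum>y\<in>X'. w' y * \<beta> y x)" for x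
    have key: "(\<Sum>x\<in>X. w x * x c) = (\<Sum>y\<in>X'. w' y * (\<Sum>x\<in>X. \<beta> y x * x c))" for c
      unfolding w_def by (simp add: sum_distrib_left sum_distrib_right sum.swap[of _ X] mult.assoc)
    show ?thesis
    proof (rule disjI1, rule exI[of _ w], intro conjI ballI)
      fix x assume "x \<in> X" then show "0 \<le> w x" unfolding w_def using \<beta> w'0
        by (intro sum_nonneg) auto
    next
      have "sum w X = (\<Sum>y\<in>X'. w' y * sum (\<beta> y) X)"
        unfolding w_def by (simp add: sum_distrib_left sum.swap[of _ X])
      moreover have "\<exists>y0\<in>X'. 0 < w' y0"
      proof (rule ccontr)
        assume "\<not> (\<exists>y0\<in>X'. 0 < w' y0)"
        then have "\<forall>y\<in>X'. w' y \<le> 0" by auto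
        then have "sum w' X' \<le> 0" by (simp add: sum_nonpos)
        with w'p show False by simp
      qed
      then obtain y0 where "y0 \<in> X'" "0 < w' y0" by blast
      ultimately show "0 < sum w X" using \<beta> w'0 finX'
        by (auto intro!: sum_pos2[of X' y0] mult_nonneg_nonneg sum_nonneg)
    next
      fix c assume "c \<in> insert c0 C'"
      then consider "c = c0" | "c \<in> C'" by auto
      then show "0 \<le> (\<Sum>x\<in>X. w x * x c)"
      proof cases
        case 1 then show ?thesis unfolding key using \<beta> w'0 by (auto intro!: sum_nonneg)
      next
        case 2
        have "(\<Sum>y\<in>X'. w' y * (\<Sum>x\<in>X. \<beta> y x * x c)) = (\<Sum>y\<in>X'. w' y * y c)"
          using \<beta> by (intro sum.cong) auto
        then show ?thesis unfolding key using w'c 2 by auto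
      qed
    qed
  next
    assume "\<exists>q. (\<forall>c\<in>C'. 0 \<le> q c) \<and> (\<forall>x\<in>X'. (\<Sum>c\<in>C'. x c * q c) < 0)"
    then obtain q' where q'0: "\<forall>c\<in>C'. 0 \<le> q' c" and q'n: "\<forall>x\<in>X'. (\<Sum>c\<in>C'. x c * q' c) < 0"
      by blast
    define b where "b x = (\<Sum>c\<in>C'. x c * q' c)" for x
    have b1: "b x < 0" if "x \<in> X" "0 \<le> x c0" for x
      using q'n that unfolding X'_def b_def by auto
    have b2: "i c0 * b j - j c0 * b i < 0" if "i \<in> X" "j \<in> X" "0 < i c0" "j c0 < 0" for i j
    proof -
      have "pr (i,j) \<in> X'" unfolding X'_def PR_def using that by auto
      then have "(\<Sum>c\<in>C'. pr (i,j) c * q' c) < 0" using q'n by auto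
      moreover have "(\<Sum>c\<in>C'. pr (i,j) c * q' c) = i c0 * b j - j c0 * b i"
        unfolding pr_def b_def by (simp add: sum_distrib_left sum_subtractf left_diff_distrib mult.assoc)
      ultimately show ?thesis by simp
    qed
    define L where "L = insert 0 ((\<lambda>j. b j / (- j c0)) ` {j\<in>X. j c0 < 0})"
    define U where "U = (\<lambda>i. - b i / i c0) ` {i\<in>X. 0 < i c0}"
    have "\<forall>l\<in>L. \<forall>u\<in>U. l < u"
    proof (intro ballI)
      fix l u assume "l \<in> L" "u \<in> U"
      then obtain i where i: "i \<in> X" "0 < i c0" "u = - b i / i c0" unfolding U_def by auto
      have bi: "b i < 0" using b1 i by auto
      from \<open>l \<in> L\<close> consider "l = 0" | j where "j \<in> X" "j c0 < 0" "l = b j / (- j c0)"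
        unfolding L_def by auto
      then show "l < u"
      proof cases
        case 1 then show ?thesis using i bi by (simp add: divide_neg_pos)
      next
        case 2
        have "i c0 * b j - j c0 * b i < 0" using b2 i 2 by auto
        then have "b j * i c0 < (- b i) * (- j c0)" by (simp add: algebra_simps)
        then have "b j / (- j c0) < (- b i) / i c0" using i 2 by (intro fracless) auto
        then show ?thesis using i 2 by simp
      qed
    qed
    moreover have "finite L" "finite U" "L \<noteq> {}" unfolding L_def U_def using insert.prems by auto
    ultimately obtain t where tL: "\<forall>l\<in>L. l < t" and tU: "\<forall>u\<in>U. t < u"
      using sep_lemma[of L U] by blast
    have t0: "0 < t" using tL unfolding L_def by auto
    have neg: "b x + t * x c0 < 0" if "x \<in> X" for x
    proof -
      consider "x c0 = 0" | "0 < x c0" | "x c0 < 0" by linarith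
      then show ?thesis
      proof cases
        case 1 then show ?thesis using b1 that by auto
      next
        case 2
        then have "t < - b x / x c0" using tU that unfolding U_def by auto
        then show ?thesis using 2 by (simp add: less_divide_eq field_simps)
      next
        case 3
        then have "b x / (- x c0) < t" using tL that unfolding L_def by auto
        then show ?thesis using 3 by (simp add: divide_less_eq field_simps)
      qed
    qed
    show ?thesis
    proof (rule disjI2, rule exI[of _ "q'(c0 := t)"], intro conjI ballI)
      fix c assume "c \<in> insert c0 C'" then show "0 \<le> (q'(c0 := t)) c" using q'0 t0 by auto
    next
      fix x assume "x \<in> X"
      have "(\<Sum>c\<in>insert c0 C'. x c * (q'(c0 := t)) c) = x c0 * t + (\<Sum>c\<in>C'. x c * q' c)"
        using insert.hyps by (simp add: sum.insert) (intro sum.cong, auto)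
      also have "\<dots> = b x + t * x c0" unfolding b_def by simp
      finally show "(\<Sum>c\<in>insert c0 C'. x c * (q'(c0 := t)) c) < 0" using neg \<open>x \<in> X\<close> by simp
    qed
  qed
qed



lemma acts_finite: "finite A \<Longrightarrow> finite (acts A)"
  by (simp add: acts_def)

lemma avail_acts: "a \<in> acts A \<Longrightarrow> avail A a"
  by (auto simp: acts_def avail_def)

lemma sum_acts: "finite A \<Longrightarrow> sum f (acts A) = f None + (\<Sum>x\<in>A. f (Some x))"
  by (simp add: acts_def sum.reindex)

definition lstrat :: "nat set \<Rightarrow> (nat option \<Rightarrow> real) \<Rightarrow> nat set \<Rightarrow> nat option \<Rightarrow> real" where
  "lstrat A p t a = (case a of None \<Rightarrow> 1 - (\<Sum>x\<in>t\<inter>A. p (Some x))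
     | Some x \<Rightarrow> if x \<in> t \<and> x \<in> A then p (Some x) else 0)"

lemma lstrat_strategy:
  assumes "finite A" "\<forall>a\<in>acts A. 0 \<le> p a" "sum p (acts A) = 1"
  shows "is_strategy A (lstrat A p)"
proof -
  have pS: "(\<Sum>x\<in>A. p (Some x)) = 1 - p None" using assms sum_acts[of A p] by simp
  have le: "(\<Sum>x\<in>t\<inter>A. p (Some x)) \<le> (\<Sum>x\<in>A. p (Some x))" for t
    using assms by (intro sum_mono2) (auto simp: acts_def)
  have pN: "0 \<le> p None" using assms by (auto simp: acts_def)
  show ?thesis unfolding is_strategy_def
  proof (intro conjI allI impI)
    fix t a show "0 \<le> lstrat A p t a"
      using le[of t] pS pN assms by (auto simp: lstrat_def acts_def split: option.splits)
  next
    fix t a assume "a \<notin> acts A" then show "lstrat A p t a = 0"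
      by (auto simp: lstrat_def acts_def split: option.splits)
  next
    fix t
    have "(\<Sum>x\<in>A. lstrat A p t (Some x)) = (\<Sum>x\<in>A. if x \<in> t then p (Some x) else 0)"
      by (intro sum.cong) (auto simp: lstrat_def)
    also have "\<dots> = (\<Sum>x\<in>A \<inter> t. p (Some x))" using assms by (simp add: sum.inter_restrict)
    finally show "sum (lstrat A p t) (acts A) = 1" using assms
      by (simp add: sum_acts lstrat_def Int_commute)
  qed
qed

lemma lstrat_ge:
  assumes "finite A" "\<forall>a\<in>acts A. 0 \<le> p a" "sum p (acts A) = 1" "a \<in> acts A" "avail t a"
  shows "p a \<le> lstrat A p t a"
proof (cases a)
  case None
  have pS: "(\<Sum>x\<in>A. p (Some x)) = 1 - p None" using assms sum_acts[of A p] by simp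
  have le: "(\<Sum>x\<in>t\<inter>A. p (Some x)) \<le> (\<Sum>x\<in>A. p (Some x))"
    using assms by (intro sum_mono2) (auto simp: acts_def)
  then show ?thesis using None pS by (simp add: lstrat_def)
next
  case (Some x) then show ?thesis using assms by (auto simp: lstrat_def acts_def avail_def)
qed

lemma liar_bound:
  assumes A: "finite A" and S: "finite S" and P: "\<forall>s\<in>S. 0 \<le> P s"
    and cover: "\<forall>a\<in>acts A. \<alpha> \<le> (\<Sum>s\<in>S. P s * (if avail (T s) a then 1 else 0))"
    and N: "\<forall>a\<in>acts A. \<forall>b\<in>acts A. 0 \<le> N a b"
    and p: "\<forall>a\<in>acts A. 0 \<le> p a" "sum p (acts A) = 1"
    and tau: "\<forall>b\<in>acts A. 0 \<le> \<tau> b"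
  shows "\<alpha> * (\<Sum>a\<in>acts A. \<Sum>b\<in>acts A. p a * \<tau> b * N a b) \<le>
    (\<Sum>s\<in>S. P s * (\<Sum>a\<in>acts A. \<Sum>b\<in>acts A. lstrat A p (T s) a * \<tau> b * (if avail (T s) a then N a b else 0)))"
proof -
  let ?H = "acts A"
  define K where "K a = (\<Sum>b\<in>?H. p a * \<tau> b * N a b)" for a
  define I where "I s a = (if avail (T s) a then 1 else 0 :: real)" for s a
  have K0: "0 \<le> K a" if "a \<in> ?H" for a unfolding K_def using that N p tau
    by (intro sum_nonneg) auto
  have "\<alpha> * (\<Sum>a\<in>?H. \<Sum>b\<in>?H. p a * \<tau> b * N a b) = (\<Sum>a\<in>?H. \<alpha> * K a)"
    unfolding K_def by (simp add: sum_distrib_left)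
  also have "\<dots> \<le> (\<Sum>a\<in>?H. (\<Sum>s\<in>S. P s * I s a) * K a)"
    using cover K0 unfolding I_def by (intro sum_mono mult_right_mono) auto
  also have "\<dots> = (\<Sum>s\<in>S. P s * (\<Sum>a\<in>?H. I s a * K a))"
    by (simp add: sum_distrib_left sum_distrib_right sum.swap[of _ ?H] mult.assoc)
  also have "\<dots> \<le> (\<Sum>s\<in>S. P s * (\<Sum>a\<in>?H. \<Sum>b\<in>?H. lstrat A p (T s) a * \<tau> b * (if avail (T s) a then N a b else 0)))"
  proof (rule sum_mono, rule mult_left_mono)
    fix s assume s: "s \<in> S"
    show "0 \<le> P s" using P s by auto
  next
    fix s assume s: "s \<in> S"
    show "(\<Sum>a\<in>?H. I s a * K a) \<le> (\<Sum>a\<in>?H. \<Sum>b\<in>?H. lstrat A p (T s) a * \<tau> b * (if avail (T s) a then N a b else 0))"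
    proof (intro sum_mono)
      fix a assume a: "a \<in> ?H"
      show "I s a * K a \<le> (\<Sum>b\<in>?H. lstrat A p (T s) a * \<tau> b * (if avail (T s) a then N a b else 0))"
      proof (cases "avail (T s) a")
        case True
        have "p a \<le> lstrat A p (T s) a" using lstrat_ge[OF A p a True] .
        then show ?thesis using True a N tau unfolding I_def K_def
          by (auto intro!: sum_mono mult_right_mono)
      next
        case False then show ?thesis unfolding I_def by simp
      qed
    qed
  qed
  finally show ?thesis .
qed



lemma payoff_bounds:
  assumes "is_policy A M" "a1 \<in> acts A" "a2 \<in> acts A" "i = 1 \<or> i = 2"
  shows "0 \<le> payoff M i t1 t2 a1 a2 \<and> payoff M i t1 t2 a1 a2 \<le> 1"
  using assms unfolding payoff_def is_policy_def by auto

lemma exp_bounds: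
  assumes "is_policy A M" "finite A" "finite S" "\<forall>s\<in>S. 0 \<le> P s" "sum P S = 1"
    "is_strategy A \<sigma>1" "is_strategy A \<sigma>2" "i = 1 \<or> i = 2"
  shows "0 \<le> exp_payoff A S P T1 T2 M i \<sigma>1 \<sigma>2 \<and> exp_payoff A S P T1 T2 M i \<sigma>1 \<sigma>2 \<le> 1"
proof -
  let ?H = "acts A"
  define X where "X s = (\<Sum>a1\<in>?H. \<Sum>a2\<in>?H. \<sigma>1 (T1 s) a1 * \<sigma>2 (T2 s) a2 * payoff M i (T1 s) (T2 s) a1 a2)" for s
  have s1: "0 \<le> \<sigma>1 t a" "0 \<le> \<sigma>2 t a" "sum (\<sigma>1 t) ?H = 1" "sum (\<sigma>2 t) ?H = 1" for t a
    using assms(6,7) unfolding is_strategy_def by auto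
  have X0: "0 \<le> X s" for s unfolding X_def using s1 payoff_bounds[OF assms(1) _ _ assms(8)]
    by (intro sum_nonneg mult_nonneg_nonneg) auto
  have X1: "X s \<le> 1" for s
  proof -
    have "X s \<le> (\<Sum>a1\<in>?H. \<Sum>a2\<in>?H. \<sigma>1 (T1 s) a1 * \<sigma>2 (T2 s) a2)"
      unfolding X_def using s1 payoff_bounds[OF assms(1) _ _ assms(8)]
      by (intro sum_mono) (auto intro!: mult_left_le mult_nonneg_nonneg)
    also have "\<dots> = sum (\<sigma>1 (T1 s)) ?H * sum (\<sigma>2 (T2 s)) ?H" by (simp add: sum_product)
    finally show ?thesis using s1 by simp
  qed
  have e: "exp_payoff A S P T1 T2 M i \<sigma>1 \<sigma>2 = (\<Sum>s\<in>S. P s * X s)"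
    unfolding exp_payoff_def X_def ..
  have "(\<Sum>s\<in>S. P s * X s) \<le> (\<Sum>s\<in>S. P s)"
    using assms(4) X1 by (intro sum_mono) (auto intro: mult_left_le)
  moreover have "0 \<le> (\<Sum>s\<in>S. P s * X s)" using assms(4) X0 by (intro sum_nonneg) auto
  ultimately show ?thesis using e assms(5) by simp
qed

lemma val_ge:
  fixes E :: "'x \<Rightarrow> 'x \<Rightarrow> real"
  assumes "\<forall>x\<in>St. \<forall>y\<in>St. 0 \<le> E x y \<and> E x y \<le> 1" "\<sigma> \<in> St" "\<forall>y\<in>St. c \<le> E \<sigma> y"
  shows "c \<le> (SUP x\<in>St. INF y\<in>St. E x y)"
proof -
  have ne: "St \<noteq> {}" using assms(2) by auto
  have "c \<le> (INF y\<in>St. E \<sigma> y)" using assms ne by (intro cINF_greatest) auto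
  also have "\<dots> \<le> (SUP x\<in>St. INF y\<in>St. E x y)"
  proof (rule cSUP_upper[OF assms(2)])
    have "(INF y\<in>St. E x y) \<le> 1" if "x \<in> St" for x
    proof -
      have "(INF y\<in>St. E x y) \<le> E x \<sigma>"
        using assms that by (intro cINF_lower) (auto simp: bdd_below_def)
      then show ?thesis using assms that by force
    qed
    then show "bdd_above ((\<lambda>x. INF y\<in>St. E x y) ` St)" by (auto simp: bdd_above_def)
  qed
  finally show ?thesis .
qed


lemma matrix_alt:
  fixes H :: "'a set" and N :: "'a \<Rightarrow> 'a \<Rightarrow> real"
  assumes H: "finite H" "H \<noteq> {}"
  shows "(\<exists>p. (\<forall>a\<in>H. 0 \<le> p a) \<and> sum p H = 1 \<and> (\<forall>b\<in>H. v \<le> (\<Sum>a\<in>H. p a * N a b)))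
       \<or> (\<exists>q. (\<forall>b\<in>H. 0 \<le> q b) \<and> sum q H = 1 \<and> (\<forall>a\<in>H. (\<Sum>b\<in>H. N a b * q b) \<le> v))"
proof -
  define row where "row a = (\<lambda>(b, fl). if fl then N a b - v else (if b = a then 1 else 0 :: real))" for a
  have inj: "inj_on row H"
  proof (rule inj_onI)
    fix a a' assume "row a = row a'"
    then have "row a (a, False) = row a' (a, False)" by simp
    then show "a = a'" unfolding row_def by (auto split: if_splits)
  qed
  define C where "C = (\<lambda>b. (b,True)) ` H"
  have injC: "inj_on (\<lambda>b. (b,True)) H" by (auto simp: inj_on_def)
  have finC: "finite C" unfolding C_def using H by simp
  have finX: "finite (row ` H)" using H by simp
  from ville[OF finC finX] show ?thesis
  proof
    assume "\<exists>w. (\<forall>x\<in>row ` H. 0 \<le> w x) \<and> 0 < sum w (row ` H) \<and> (\<forall>c\<in>C. 0 \<le> (\<Sum>x\<in>row ` H. w x * x c))"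
    then obtain w where w0: "\<forall>x\<in>row ` H. 0 \<le> w x" and wp: "0 < sum w (row ` H)"
      and wc: "\<forall>c\<in>C. 0 \<le> (\<Sum>x\<in>row ` H. w x * x c)" by blast
    define W where "W = (\<Sum>a\<in>H. w (row a))"
    have WW: "W = sum w (row ` H)" unfolding W_def by (simp add: sum.reindex[OF inj])
    then have Wp: "0 < W" using wp by simp
    define p where "p a = w (row a) / W" for a
    show ?thesis
    proof (rule disjI1, rule exI[of _ p], intro conjI ballI)
      fix a assume "a \<in> H" then show "0 \<le> p a" unfolding p_def using w0 Wp by auto
    next
      show "sum p H = 1" unfolding p_def using Wp by (simp add: sum_divide_distrib[symmetric] W_def)
    next
      fix b assume b: "b \<in> H"
      then have "(b, True) \<in> C" unfolding C_def by auto
      then have "0 \<le> (\<Sum>x\<in>row ` H. w x * x (b, True))" using wc by blast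
      also have "\<dots> = (\<Sum>a\<in>H. w (row a) * (N a b - v))"
        by (subst sum.reindex[OF inj]) (simp add: row_def)
      also have "\<dots> = (\<Sum>a\<in>H. w (row a) * N a b) - v * W"
        by (simp add: right_diff_distrib sum_subtractf W_def sum_distrib_left mult.commute)
      finally have "v * W \<le> (\<Sum>a\<in>H. w (row a) * N a b)" by simp
      then have "v \<le> (\<Sum>a\<in>H. w (row a) * N a b) / W" using Wp by (simp add: le_divide_eq)
      also have "\<dots> = (\<Sum>a\<in>H. p a * N a b)" unfolding p_def
        by (simp add: sum_divide_distrib)
      finally show "v \<le> (\<Sum>a\<in>H. p a * N a b)" .
    qed
  next
    assume "\<exists>q. (\<forall>c\<in>C. 0 \<le> q c) \<and> (\<forall>x\<in>row ` H. (\<Sum>c\<in>C. x c * q c) < 0)"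
    then obtain q where q0: "\<forall>c\<in>C. 0 \<le> q c" and qn: "\<forall>x\<in>row ` H. (\<Sum>c\<in>C. x c * q c) < 0"
      by blast
    define q' where "q' b = q (b, True)" for b
    have q'0: "\<forall>b\<in>H. 0 \<le> q' b" using q0 unfolding q'_def C_def by auto
    have eq: "(\<Sum>c\<in>C. row a c * q c) = (\<Sum>b\<in>H. N a b * q' b) - v * sum q' H" for a
      unfolding C_def by (simp add: sum.reindex[OF injC] row_def q'_def left_diff_distrib
          sum_subtractf sum_distrib_left)
    have neg: "(\<Sum>b\<in>H. N a b * q' b) - v * sum q' H < 0" if "a \<in> H" for a
      using qn that eq by auto
    define Q where "Q = sum q' H"
    have Q0: "0 \<le> Q" unfolding Q_def using q'0 by (simp add: sum_nonneg)
    have Qp: "0 < Q"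
    proof (rule ccontr)
      assume "\<not> 0 < Q"
      then have "Q = 0" using Q0 by simp
      then have "\<forall>b\<in>H. q' b = 0" unfolding Q_def using q'0 H by (simp add: sum_nonneg_eq_0_iff)
      moreover obtain a0 where "a0 \<in> H" using H by auto
      ultimately show False using neg[of a0] by simp
    qed
    show ?thesis
    proof (rule disjI2, rule exI[of _ "\<lambda>b. q' b / Q"], intro conjI ballI)
      fix b assume "b \<in> H" then show "0 \<le> q' b / Q" using q'0 Qp by auto
    next
      show "(\<Sum>b\<in>H. q' b / Q) = 1" using Qp by (simp add: sum_divide_distrib[symmetric] Q_def)
    next
      fix a assume a: "a \<in> H"
      have "(\<Sum>b\<in>H. N a b * (q' b / Q)) = (\<Sum>b\<in>H. N a b * q' b) / Q"
        by (simp add: sum_divide_distrib)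
      also have "\<dots> \<le> v" using neg[OF a] Qp unfolding Q_def[symmetric] by (simp add: divide_le_eq)
      finally show "(\<Sum>b\<in>H. N a b * (q' b / Q)) \<le> v" .
    qed
  qed
qed



lemma part1:
  assumes pol: "is_policy A M" and A: "finite A" and S: "finite S" and P: "\<forall>s\<in>S. 0 \<le> P s" "sum P S = 1"
    and Cw: "\<forall>s. Cw s = A" and \<alpha>0: "0 \<le> \<alpha>"
    and cover: "\<forall>a\<in>acts A. \<alpha> \<le> (\<Sum>s\<in>S. P s * (if avail (Cl s) a then 1 else 0))"
    and p: "\<forall>a\<in>acts A. 0 \<le> p a" "sum p (acts A) = 1"
    and pv: "\<forall>b\<in>acts A. v \<le> (\<Sum>a\<in>acts A. p a * M 1 a b)"
  shows "\<alpha> * v \<le> val1 A S P Cl Cw M"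
proof -
  let ?H = "acts A"
  let ?St = "{\<sigma>. is_strategy A \<sigma>}"
  have Mnn: "\<forall>a\<in>?H. \<forall>b\<in>?H. 0 \<le> M 1 a b" using pol unfolding is_policy_def by auto
  have strat: "lstrat A p \<in> ?St" using lstrat_strategy[OF A p] by simp
  have bnd: "\<forall>x\<in>?St. \<forall>y\<in>?St. 0 \<le> exp_payoff A S P Cl Cw M 1 x y \<and> exp_payoff A S P Cl Cw M 1 x y \<le> 1"
    using exp_bounds[OF pol A S P] by auto
  have "\<forall>\<tau>\<in>?St. \<alpha> * v \<le> exp_payoff A S P Cl Cw M 1 (lstrat A p) \<tau>"
  proof
    fix \<tau> assume "\<tau> \<in> ?St"
    then have tau: "\<forall>b\<in>?H. 0 \<le> \<tau> A b" "sum (\<tau> A) ?H = 1" unfolding is_strategy_def by auto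
    have "exp_payoff A S P Cl Cw M 1 (lstrat A p) \<tau> =
      (\<Sum>s\<in>S. P s * (\<Sum>a\<in>?H. \<Sum>b\<in>?H. lstrat A p (Cl s) a * \<tau> A b * (if avail (Cl s) a then M 1 a b else 0)))"
      unfolding exp_payoff_def using Cw
      by (auto intro!: sum.cong arg_cong2[where f="(*)"] simp: payoff_def avail_acts)
    moreover have "\<alpha> * (\<Sum>a\<in>?H. \<Sum>b\<in>?H. p a * \<tau> A b * M 1 a b) \<le> \<dots>"
      by (rule liar_bound[OF A S P(1) cover Mnn p tau(1)])
    moreover have "v \<le> (\<Sum>a\<in>?H. \<Sum>b\<in>?H. p a * \<tau> A b * M 1 a b)"
    proof -
      have "(\<Sum>a\<in>?H. \<Sum>b\<in>?H. p a * \<tau> A b * M 1 a b) = (\<Sum>b\<in>?H. \<tau> A b * (\<Sum>a\<in>?H. p a * M 1 a b))"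
        by (subst sum.swap) (simp add: sum_distrib_left ac_simps)
      also have "\<dots> \<ge> (\<Sum>b\<in>?H. \<tau> A b * v)" using pv tau by (intro sum_mono mult_left_mono) auto
      finally show ?thesis using tau by (simp add: sum_distrib_right[symmetric])
    qed
    ultimately show "\<alpha> * v \<le> exp_payoff A S P Cl Cw M 1 (lstrat A p) \<tau>"
      using \<alpha>0 by (smt (verit) mult_left_mono)
  qed
  then show ?thesis unfolding val1_def by (rule val_ge[OF bnd strat])
qed

lemma part2:
  assumes pol: "is_policy A M" and A: "finite A" and S: "finite S" and P: "\<forall>s\<in>S. 0 \<le> P s" "sum P S = 1"
    and Cw: "\<forall>s. Cw s = A" and \<alpha>0: "0 \<le> \<alpha>"
    and cover: "\<forall>a\<in>acts A. \<alpha> \<le> (\<Sum>s\<in>S. P s * (if avail (Cl s) a then 1 else 0))"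
    and q: "\<forall>a\<in>acts A. 0 \<le> q a" "sum q (acts A) = 1"
    and qv: "\<forall>b\<in>acts A. (\<Sum>a\<in>acts A. M 1 b a * q a) \<le> v"
  shows "\<alpha> * (1 - v) \<le> val2 A S P Cw Cl M"
proof -
  let ?H = "acts A"
  let ?St = "{\<sigma>. is_strategy A \<sigma>}"
  have Mnn: "\<forall>a\<in>?H. \<forall>b\<in>?H. 0 \<le> M 2 b a" using pol unfolding is_policy_def by auto
  have M21: "\<forall>a\<in>?H. \<forall>b\<in>?H. M 2 b a = 1 - M 1 b a" using pol unfolding is_policy_def by force
  have strat: "lstrat A q \<in> ?St" using lstrat_strategy[OF A q] by simp
  have bnd: "\<forall>x\<in>?St. \<forall>y\<in>?St. 0 \<le> exp_payoff A S P Cw Cl M 2 y x \<and> exp_payoff A S P Cw Cl M 2 y x \<le> 1"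
    using exp_bounds[OF pol A S P] by auto
  have "\<forall>\<tau>\<in>?St. \<alpha> * (1 - v) \<le> exp_payoff A S P Cw Cl M 2 \<tau> (lstrat A q)"
  proof
    fix \<tau> assume "\<tau> \<in> ?St"
    then have tau: "\<forall>b\<in>?H. 0 \<le> \<tau> A b" "sum (\<tau> A) ?H = 1" unfolding is_strategy_def by auto
    have "exp_payoff A S P Cw Cl M 2 \<tau> (lstrat A q) =
      (\<Sum>s\<in>S. P s * (\<Sum>b\<in>?H. \<Sum>a\<in>?H. \<tau> A b * lstrat A q (Cl s) a * (if avail (Cl s) a then M 2 b a else 0)))"
      unfolding exp_payoff_def using Cw
      by (auto intro!: sum.cong arg_cong2[where f="(*)"] simp: payoff_def avail_acts)
    also have "\<dots> = (\<Sum>s\<in>S. P s * (\<Sum>a\<in>?H. \<Sum>b\<in>?H. lstrat A q (Cl s) a * \<tau> A b * (if avail (Cl s) a then M 2 b a else 0)))"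
    proof -
      have "\<And>s. (\<Sum>b\<in>?H. \<Sum>a\<in>?H. \<tau> A b * lstrat A q (Cl s) a * (if avail (Cl s) a then M 2 b a else 0))
         = (\<Sum>a\<in>?H. \<Sum>b\<in>?H. lstrat A q (Cl s) a * \<tau> A b * (if avail (Cl s) a then M 2 b a else 0))"
        by (subst sum.swap) (simp add: ac_simps)
      then show ?thesis by simp
    qed
    finally have e: "exp_payoff A S P Cw Cl M 2 \<tau> (lstrat A q) = \<dots>" .
    have lb: "\<alpha> * (\<Sum>a\<in>?H. \<Sum>b\<in>?H. q a * \<tau> A b * M 2 b a) \<le> (\<Sum>s\<in>S. P s * (\<Sum>a\<in>?H. \<Sum>b\<in>?H. lstrat A q (Cl s) a * \<tau> A b * (if avail (Cl s) a then M 2 b a else 0)))"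
      using liar_bound[where N="\<lambda>a b. M 2 b a", OF A S P(1) cover Mnn q tau(1)] by simp
    have "1 - v \<le> (\<Sum>a\<in>?H. \<Sum>b\<in>?H. q a * \<tau> A b * M 2 b a)"
    proof -
      have "(\<Sum>a\<in>?H. \<Sum>b\<in>?H. q a * \<tau> A b * M 2 b a) = (\<Sum>b\<in>?H. \<tau> A b * (\<Sum>a\<in>?H. q a * M 2 b a))"
        by (subst sum.swap) (simp add: sum_distrib_left ac_simps)
      also have "\<dots> = (\<Sum>b\<in>?H. \<tau> A b * (1 - (\<Sum>a\<in>?H. M 1 b a * q a)))"
      proof (intro sum.cong refl arg_cong2[where f="(*)"])
        fix b assume b: "b \<in> ?H"
        have "(\<Sum>a\<in>?H. q a * M 2 b a) = (\<Sum>a\<in>?H. q a - M 1 b a * q a)"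
        proof (rule sum.cong[OF refl])
          fix a assume "a \<in> ?H"
          then have h: "M 2 b a = 1 - M 1 b a" using M21 b by blast
          show "q a * M 2 b a = q a - M 1 b a * q a" unfolding h by (simp add: algebra_simps)
        qed
        then show "(\<Sum>a\<in>?H. q a * M 2 b a) = 1 - (\<Sum>a\<in>?H. M 1 b a * q a)"
          using q by (simp add: sum_subtractf)
      qed
      also have "\<dots> \<ge> (\<Sum>b\<in>?H. \<tau> A b * (1 - v))" using qv tau by (intro sum_mono mult_left_mono) auto
      finally show ?thesis using tau by (simp add: sum_distrib_right[symmetric])
    qed
    then show "\<alpha> * (1 - v) \<le> exp_payoff A S P Cw Cl M 2 \<tau> (lstrat A q)"
      using \<alpha>0 lb e by (smt (verit) mult_left_mono)
  qed
  then show ?thesis unfolding val2_def by (rule val_ge[OF bnd strat])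
qed



theorem theorem5p5:
  fixes m n :: nat
  assumes "0 < n" and "n \<le> m"
  shows "\<exists>(A::nat set) (S::nat set) (P::nat \<Rightarrow> real) (Cw::nat \<Rightarrow> nat set) (Cl::nat \<Rightarrow> nat set).
           is_PIDDG A S P Cw Cl \<and> (\<forall>s\<in>S. m \<le> card (Cw s) \<and> card (Cl s) \<le> n) \<and>
           (\<forall>M. is_policy A M \<longrightarrow> real n / (2 * real m) \<le> piddg_error A S P Cw Cl M)"
proof -
  define A where "A = {0..<m}"
  define S where "S = {0..<m}"
  define P :: "nat \<Rightarrow> real" where "P = (\<lambda>s. 1 / real m)"
  define Cw where "Cw = (\<lambda>s::nat. A)"
  define Cl where "Cl = (\<lambda>s. (\<lambda>k. (s + k) mod m) ` {0..<n})"
  define \<alpha> where "\<alpha> = real n / real m"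
  have m0: "0 < m" using assms by simp
  have finA: "finite A" and finS: "finite S" unfolding A_def S_def by auto
  have P0: "\<forall>s\<in>S. 0 \<le> P s" unfolding P_def by simp
  have P1: "sum P S = 1" unfolding P_def S_def using m0 by simp
  have piddg: "is_PIDDG A S P Cw Cl"
    unfolding is_PIDDG_def using finA finS P0 P1 m0 by (auto simp: Cw_def Cl_def A_def)
  have cards: "\<forall>s\<in>S. m \<le> card (Cw s) \<and> card (Cl s) \<le> n"
    unfolding Cw_def Cl_def A_def using card_image_le[of "{0..<n}"] by auto
  have \<alpha>0: "0 \<le> \<alpha>" and \<alpha>p: "0 < \<alpha>" and \<alpha>1: "\<alpha> \<le> 1"
    unfolding \<alpha>_def using assms by auto
  have cover: "\<forall>a\<in>acts A. \<alpha> \<le> (\<Sum>s\<in>S. P s * (if avail (Cl s) a then 1 else 0))"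
  proof
    fix a assume "a \<in> acts A"
    then consider "a = None" | x where "a = Some x" "x < m" unfolding acts_def A_def by auto
    then show "\<alpha> \<le> (\<Sum>s\<in>S. P s * (if avail (Cl s) a then 1 else 0))"
    proof cases
      case 1 then show ?thesis using P1 \<alpha>1 by (simp add: avail_def)
    next
      case 2
      define g where "g k = (if k \<le> x then x - k else x + m - k)" for k
      have sub: "g ` {0..<n} \<subseteq> S \<inter> {s. x \<in> Cl s}"
      proof
        fix s assume "s \<in> g ` {0..<n}"
        then obtain k where k: "k < n" "s = g k" by auto
        have "s < m" using k 2 assms unfolding g_def by auto
        moreover have "(s + k) mod m = x" using k 2 assms unfolding g_def by auto
        ultimately show "s \<in> S \<inter> {s. x \<in> Cl s}" unfolding S_def Cl_def using k
          by (auto intro!: image_eqI[of _ _ k])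
      qed
      have inj: "inj_on g {0..<n}" unfolding inj_on_def g_def using 2 assms by auto
      have "n \<le> card (S \<inter> {s. x \<in> Cl s})"
        using card_mono[OF _ sub] card_image[OF inj] finS by auto
      moreover have "(\<Sum>s\<in>S. P s * (if avail (Cl s) a then 1 else 0)) = card (S \<inter> {s. x \<in> Cl s}) / real m"
      proof -
        have c: "(\<Sum>s\<in>S. if s \<in> {s. x \<in> Cl s} then (1::real) else 0) = real (card (S \<inter> {s. x \<in> Cl s}))"
          using sum.inter_restrict[OF finS, of "\<lambda>_. 1::real" "{s. x \<in> Cl s}"] by simp
        have "(\<Sum>s\<in>S. P s * (if avail (Cl s) a then 1 else 0)) = (\<Sum>s\<in>S. if s \<in> {s. x \<in> Cl s} then (1::real) else 0) / real m"
          unfolding P_def using 2 by (simp add: avail_def sum_divide_distrib)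
        then show ?thesis using c by simp
      qed
      ultimately show ?thesis unfolding \<alpha>_def using m0 by (simp add: divide_right_mono)
    qed
  qed
  have main: "\<alpha> \<le> val1 A S P Cl Cw M + val2 A S P Cw Cl M" if pol: "is_policy A M" for M
  proof (rule ccontr)
    let ?F1 = "val1 A S P Cl Cw M" and ?F2 = "val2 A S P Cw Cl M"
    assume "\<not> \<alpha> \<le> ?F1 + ?F2"
    then have lt: "?F1 + ?F2 < \<alpha>" by simp
    define v where "v = (?F1 + \<alpha> - ?F2) / (2 * \<alpha>)"
    have v1: "\<alpha> * v = (?F1 + \<alpha> - ?F2) / 2" unfolding v_def using \<alpha>p by simp
    have fin: "finite (acts A)" "acts A \<noteq> {}" using finA by (auto simp: acts_def)
    have CwA: "\<forall>s. Cw s = A" unfolding Cw_def by simp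
    from matrix_alt[OF fin, of v "M 1"] show False
    proof
      assume "\<exists>p. (\<forall>a\<in>acts A. 0 \<le> p a) \<and> sum p (acts A) = 1 \<and> (\<forall>b\<in>acts A. v \<le> (\<Sum>a\<in>acts A. p a * M 1 a b))"
      then obtain p where "\<forall>a\<in>acts A. 0 \<le> p a" "sum p (acts A) = 1" "\<forall>b\<in>acts A. v \<le> (\<Sum>a\<in>acts A. p a * M 1 a b)"
        by blast
      from part1[OF pol finA finS P0 P1 CwA \<alpha>0 cover this] have "\<alpha> * v \<le> ?F1" .
      then show False using v1 lt by simp
    next
      assume "\<exists>q. (\<forall>b\<in>acts A. 0 \<le> q b) \<and> sum q (acts A) = 1 \<and> (\<forall>a\<in>acts A. (\<Sum>b\<in>acts A. M 1 a b * q b) \<le> v)"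
      then obtain q where "\<forall>b\<in>acts A. 0 \<le> q b" "sum q (acts A) = 1" "\<forall>a\<in>acts A. (\<Sum>b\<in>acts A. M 1 a b * q b) \<le> v"
        by blast
      from part2[OF pol finA finS P0 P1 CwA \<alpha>0 cover this] have "\<alpha> * (1 - v) \<le> ?F2" .
      then have "\<alpha> - \<alpha> * v \<le> ?F2" by (simp add: right_diff_distrib)
      then have "\<alpha> - (?F1 + \<alpha> - ?F2) / 2 \<le> ?F2" using v1 by simp
      then have "\<alpha> \<le> ?F1 + ?F2" by (simp add: field_simps)
      then show False using lt by simp
    qed
  qed
  show ?thesis
  proof (intro exI conjI allI impI)
    show "is_PIDDG A S P Cw Cl" by (rule piddg)
    show "\<forall>s\<in>S. m \<le> card (Cw s) \<and> card (Cl s) \<le> n" by (rule cards)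
  next
    fix M assume "is_policy A M"
    from main[OF this] show "real n / (2 * real m) \<le> piddg_error A S P Cw Cl M"
      unfolding piddg_error_def \<alpha>_def by simp
  qed
qed


end
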